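(* For $k\ge4$ and $d\in[d_{\mathrm{lbd}}(k),d_{\mathrm{ubd}}(k)]$, $\Psi_d(\frac12-\frac1{2^k})>\frac12-\frac1{2^k}$.
   Context: $\hat\Psi(x)=\frac{1-2x^{k-1}}{1-x^{k-1}}$, $\dot\Psi(v)=\frac{1-v^{d-1}}{2-v^{d-1}}$, $\Psi_d=\dot\Psi\circ\hat\Psi$ ($d$ real). $d_{\mathrm{lbd}}(4)=16.7$, $d_{\mathrm{lbd}}(k)=(2^{k-1}-2)k\log2$ for $k\ge5$; $d_{\mathrm{ubd}}(k)=2^{k-1}k\log2$. *)

theory Defs
  imports Complex_Main
begin

definition Psi_hat :: "nat \<Rightarrow> real \<Rightarrow> real" where
  "Psi_hat k x = (1 - 2 * x ^ (k - 1)) / (1 - x ^ (k - 1))"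

definition Psi_dot :: "real \<Rightarrow> real \<Rightarrow> real" where
  "Psi_dot d v = (1 - v powr (d - 1)) / (2 - v powr (d - 1))"

definition Psi :: "nat \<Rightarrow> real \<Rightarrow> real \<Rightarrow> real" where
  "Psi k d = Psi_dot d \<circ> Psi_hat k"

definition d_lbd :: "nat \<Rightarrow> real" where
  "d_lbd k = (if k = 4 then 16.7 else (2 ^ (k - 1) - 2) * real k * ln 2)"

definition d_ubd :: "nat \<Rightarrow> real" where
  "d_ubd k = 2 ^ (k - 1) * real k * ln 2"

end

theory Submission
  imports Defs
begin


lemma sq_step: "0 \<le> (a::real) \<Longrightarrow> a^m \<le> b \<Longrightarrow> b^2 \<le> c \<Longrightarrow> n = 2*m \<Longrightarrow> a^n \<le> c"
proof -
  assume h: "0 \<le> a" "a^m \<le> b" "b^2 \<le> c" "n = 2*m"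
  have "a^n = (a^m)^2" using h(4) by (simp add: power_mult[symmetric] mult.commute)
  also have "\<dots> \<le> b^2" using h by (intro power_mono) auto
  finally show ?thesis using h(3) by simp
qed
lemma combine:
  fixes v :: real
  assumes "0 \<le> v" "v^128 \<le> a" "v^16 \<le> b" "v^8 \<le> c" "v^4 \<le> d"
  shows "v^157 \<le> a*b*c*d*v"
proof -
  have e: "v^157 = v^128 * v^16 * v^8 * v^4 * v"
  proof -
    have "v^157 = v^(128+16+8+4+1)" by simp
    also have "\<dots> = v^128 * v^16 * v^8 * v^4 * v" by (simp only: power_add power_one_right)
    finally show ?thesis .
  qed
  have "0 \<le> a" "0 \<le> b" "0 \<le> c" "0 \<le> d"
    using assms order_trans[OF zero_le_power[OF assms(1)]] by blast+
  then show ?thesis unfolding e using assms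
    by (intro mult_mono mult_nonneg_nonneg zero_le_power) auto
qed
lemma k4_num: "(3410/3753::real)^157 < (2/9)^10"
proof -
  let ?v = "3410/3753::real"
  have b1: "?v^2 \<le> 10319571/12500000" by (simp add: power_divide)
  have b2: "?v^4 \<le> 6815587/10000000"
    by (rule sq_step[OF _ b1]) (simp_all add: power_divide)
  have b3: "?v^8 \<le> 46452227/100000000"
    by (rule sq_step[OF _ b2]) (simp_all add: power_divide)
  have b4: "?v^16 \<le> 10789047/50000000"
    by (rule sq_step[OF _ b3]) (simp_all add: power_divide)
  have b5: "?v^32 \<le> 2328071/50000000"
    by (rule sq_step[OF _ b4]) (simp_all add: power_divide)
  have b6: "?v^64 \<le> 216797/100000000"
    by (rule sq_step[OF _ b5]) (simp_all add: power_divide)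
  have b7: "?v^128 \<le> 471/100000000"
    by (rule sq_step[OF _ b6]) (simp_all add: power_divide)
  have "?v^157 \<le> (471/100000000) * (10789047/50000000) * (46452227/100000000) * (6815587/10000000) * ?v"
    by (rule combine[OF _ b7 b4 b3 b2]) simp
  also have "\<dots> < (2/9)^10" by (simp add: power_divide)
  finally show ?thesis .
qed
lemma ln2_ge: "ln (2::real) \<ge> 1/2"
proof -
  have "ln (1/2::real) \<le> 1/2 - 1" by (rule ln_le_minus_one) simp
  thus ?thesis by (simp add: ln_div)
qed

lemma poly_bound: "n \<ge> 5 \<Longrightarrow> real ((n+1) * (n+2)) * 32 \<le> 42 * 2^n"
proof (induction n rule: nat_induct_at_least)
  case base then show ?case by simp
next
  case (Suc n)
  have "real ((Suc n+1) * (Suc n + 2)) * 32 \<le> 2 * (real ((n+1) * (n+2)) * 32)"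
  proof -
    have e1: "real ((Suc n+1)*(Suc n+2)) = (real n+2)*(real n+3)"
      and e2: "real ((n+1)*(n+2)) = (real n+1)*(real n+2)" by (simp_all add: algebra_simps)
    have "(real n+2)*(real n+3) \<le> (real n+2)*(2*(real n+1))" using Suc(1) by (intro mult_left_mono) auto
    thus ?thesis unfolding e1 e2 by (simp add: algebra_simps)
  qed
  also have "\<dots> \<le> 2 * (42 * 2^n)" using Suc by simp
  finally show ?case by simp
qed

lemma key:
  fixes t L :: real and n :: nat
  assumes n: "n \<ge> 4" and t: "t = 1/2^n" and L: "L = ln 2"
  shows "((1-2*t)*(n+1)*L - t)*(1-n*t) > (n-1)*L + t"
proof (cases "n = 4")
  case True
  have t16: "t = 1/16" using True t by simp
  have "((1-2*t)*(n+1)*L - t)*(1-n*t) = 105/32*L - 3/64" by (simp add: t16 True algebra_simps)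
  moreover have "(n-1)*L+t = 3*L + 1/16" by (simp add: t16 True algebra_simps)
  ultimately show ?thesis using L ln2_ge by linarith
next
  case False
  hence n5: "n \<ge> 5" using n by simp
  have tpos: "t > 0" using t by simp
  have "(2::real)^5 \<le> 2^n" using n5 by (intro power_increasing) auto
  hence "t * 32 \<le> t * 2^n" using tpos by (intro mult_left_mono) auto
  hence t32: "t \<le> 1/32" using t by simp
  have P0: "real ((n+1)*(n+2)) / 2^n \<le> 42/32"
    using poly_bound[OF n5] by (simp add: pos_divide_le_eq)
  have P: "(n+1)*(n+2)*t \<le> 42/32"
    using P0 t by simp
  have L2: "L \<ge> 1/2" using L ln2_ge by simp
  have "(1-2*t)*(1-n*t) \<ge> 1 - (n+2)*t"
    using tpos by (simp add: algebra_simps)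
  hence A: "(1-2*t)*(n+1)*L*(1-n*t) \<ge> (n+1)*L*(1 - (n+2)*t)"
    using L2 by (simp add: mult.assoc mult.left_commute mult_left_mono)
  have B: "t*(1-n*t) \<le> t" using tpos by (simp add: algebra_simps)
  have C: "(n+1)*(n+2)*t*L \<le> 42/32*L" using P L2 by (intro mult_right_mono) auto
  have "((1-2*t)*(n+1)*L - t)*(1-n*t) = (1-2*t)*(n+1)*L*(1-n*t) - t*(1-n*t)"
    by (simp add: algebra_simps)
  also have "\<dots> \<ge> (n+1)*L*(1 - (n+2)*t) - t" using A B by linarith
  finally have D: "((1-2*t)*(n+1)*L - t)*(1-n*t) \<ge> (n+1)*L - (n+1)*(n+2)*t*L - t"
    by (simp add: algebra_simps)
  show ?thesis using D C t32 L2 n5 by (simp add: algebra_simps)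
qed


lemma gen:
  fixes t L D y v :: real and n :: nat
  assumes n: "n \<ge> 4" and t: "t = 1/2^n" and L: "L = ln 2"
    and D: "D = ((2::real)^n - 2)*(real n+1)*L - 1"
    and y: "y = t*(1-t)^n" and v: "v = (1-2*y)/(1-y)"
  shows "v powr D < 2*t/(1+t)"
proof -
  have tpos: "t > 0" using t by simp
  have "(2::real)^4 \<le> 2^n" using n by (intro power_increasing) auto
  hence n16: "(2::real)^n \<ge> 16" by simp
  hence "t * 16 \<le> t * 2^n" using tpos by (intro mult_left_mono) auto
  hence t16: "t \<le> 1/16" using t by simp
  have ypos: "y > 0" using y tpos t16 by simp
  have "(1-t)^n \<le> 1" using tpos t16 by (intro power_le_one) auto
  hence yt: "y \<le> t" using y tpos by (simp add: mult_left_le)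
  have "1 + real n * (-t) \<le> (1 + (-t))^n" using tpos t16 by (intro Bernoulli_inequality) auto
  hence ybern: "y \<ge> t*(1 - n*t)" using y tpos by (simp add: mult_left_mono)
  have vpos: "v > 0" using v yt t16 ypos by simp
  have a: "ln v \<le> v - 1" using vpos by (rule ln_le_minus_one)
  have b: "v - 1 = - (y/(1-y))" using v yt t16 by (simp add: field_simps)
  have c: "y/(1-y) \<ge> y" using yt t16 ypos by (simp add: field_simps)
  have lnv: "ln v \<le> - y" using a b c by linarith
  have L2: "L \<ge> 1/2" using L ln2_ge by simp
  have "((2::real)^n - 2)*(real n+1) \<ge> 14*5" using n16 n by (intro mult_mono) auto
  hence "((2::real)^n - 2)*(real n+1)*L \<ge> 70*(1/2)" using L2 by (intro mult_mono) auto
  hence Dpos: "D > 0" using D by simp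
  have tt: "2^n*t = 1" using t by simp
  have "D*t = (2^n*t - 2*t)*(real n+1)*L - t" unfolding D by (simp add: algebra_simps)
  hence Dt: "D*t = (1-2*t)*(n+1)*L - t" unfolding tt by simp
  have "D*y \<ge> D*(t*(1 - n*t))" using Dpos ybern by (intro mult_left_mono) auto
  also have "D*(t*(1 - n*t)) = ((1-2*t)*(n+1)*L - t)*(1-n*t)" using Dt by (simp add: mult.assoc[symmetric])
  finally have Dy: "D*y > (n-1)*L + t" using key[OF n t L] by simp
  have "v powr D = exp (D * ln v)" using vpos by (simp add: powr_def)
  also have "\<dots> \<le> exp (D * (-y))" using Dpos lnv by (intro exp_mono mult_left_mono) auto
  also have "\<dots> < exp (-((n-1)*L + t))" using Dy by simp
  also have "\<dots> \<le> exp (ln (2*t/(1+t)))"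
  proof (intro exp_mono)
    have lt: "ln t = - n*L" using t L by (simp add: ln_div ln_realpow)
    have "ln (2*t/(1+t)) = ln 2 + ln t - ln (1+t)" using tpos by (simp add: ln_div ln_mult)
    moreover have "ln (1+t) \<le> t" using tpos by (intro ln_add_one_self_le_self) auto
    moreover have "real (n-1) = real n - 1" using n by simp
    ultimately show "-((n-1)*L + t) \<le> ln (2*t/(1+t))" using lt L by (simp add: algebra_simps)
  qed
  also have "\<dots> = 2*t/(1+t)" using tpos by simp
  finally show ?thesis .
qed

lemma reduce:
  fixes x w :: real
  assumes "0 < x" "0 \<le> w" "w < 1" "w * (1 - x) < 1 - 2*x"
  shows "(1 - w) / (2 - w) > x"
proof -
  have "2 - w > 0" using assms by simp
  moreover have "x * (2 - w) < 1 - w" using assms by (simp add: algebra_simps)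
  ultimately show ?thesis by (simp add: field_simps)
qed

lemma k4_gen:
  fixes v c :: real
  assumes "v > 0" "c \<ge> 0" "v^157 < c^10"
  shows "v powr (157/10) < c"
proof (rule ccontr)
  assume "\<not> v powr (157/10) < c"
  hence "c^10 \<le> (v powr (157/10))^10" using assms by (intro power_mono) auto
  also have "(v powr (157/10))^10 = (v powr (157/10)) powr (real (10::nat))"
    by (rule powr_realpow[symmetric]) (use assms in simp)
  also have "\<dots> = v powr (157/10 * real (10::nat))" by (rule powr_powr)
  also have "157/10 * real (10::nat) = real (157::nat)" by simp
  also have "v powr real (157::nat) = v ^ 157" by (rule powr_realpow[OF assms(1)])
  finally show False using assms(3) by (meson not_le)
qed
lemma k4: "(3410/3753::real) powr (157/10) < 2/9"
  by (rule k4_gen[OF _ _ k4_num]) auto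
theorem lemma3p4:
  fixes k :: nat and d :: real
  assumes "k \<ge> 4" and "d_lbd k \<le> d" and "d \<le> d_ubd k"
  shows "Psi k d (1/2 - 1/2^k) > 1/2 - 1/2^k"
proof -
  define n where "n = k - 1"
  define x :: real where "x = 1/2 - 1/2^k"
  define t :: real where "t = 1/2^n"
  define y where "y = x^n"
  define v where "v = Psi_hat k x"
  define Dl where "Dl = d_lbd k - 1"
  have kn: "k = n + 1" using assms(1) n_def by simp
  have n3: "n \<ge> 3" using assms(1) n_def by simp
  have tpos: "t > 0" using t_def by simp
  have "(2::real)^3 \<le> 2^n" using n3 by (intro power_increasing) auto
  hence "t * 8 \<le> t * 2^n" using tpos by (intro mult_left_mono) auto
  hence t8: "t \<le> 1/8" using t_def by simp
  have xt: "x = (1-t)/2" unfolding x_def t_def kn by (simp add: field_simps)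
  have yt: "y = t*(1-t)^n" unfolding y_def xt t_def by (simp add: power_divide)
  have v_eq: "v = (1-2*y)/(1-y)" unfolding v_def Psi_hat_def y_def n_def by simp
  have ypos: "y > 0" using yt tpos t8 by simp
  have "(1-t)^n \<le> 1" using tpos t8 by (intro power_le_one) auto
  hence ylt: "y \<le> t" using yt tpos by (simp add: mult_left_le)
  have vpos: "v > 0" using v_eq ylt t8 ypos by simp
  have vle: "v \<le> 1" using v_eq ylt t8 ypos by simp
  have main: "v powr Dl < 2*t/(1+t)"
  proof (cases "k = 4")
    case True
    hence n: "n = 3" using kn by simp
    have t: "t = 1/8" using n t_def by simp
    have hv: "v = 3410/3753" using v_eq yt t n by (simp add: field_simps)
    have hD: "Dl = 157/10" using True Dl_def d_lbd_def by simp
    show ?thesis unfolding hv hD t using k4 by simp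
  next
    case False
    hence n4: "n \<ge> 4" using kn assms(1) by simp
    have "Dl = ((2::real)^n - 2)*(real n+1)*ln 2 - 1"
      using False Dl_def d_lbd_def kn by simp
    then show ?thesis using gen[OF n4 t_def refl _ yt v_eq] by simp
  qed
  have dl: "Dl \<le> d - 1" using assms(2) Dl_def by simp
  define w where "w = v powr (d - 1)"
  have "w \<le> v powr Dl" unfolding w_def using dl vpos vle by (intro powr_mono') auto
  hence wlt: "w < 2*t/(1+t)" using main by simp
  have w0: "0 \<le> w" unfolding w_def by simp
  have tw: "t*w \<ge> 0" using tpos w0 by simp
  have "w + t*w < t*2" using wlt tpos by (simp add: field_simps)
  hence w1: "w < 1" using tw t8 by linarith
  have wx: "w * (1 - x) < 1 - 2*x" using wlt tpos by (simp add: xt field_simps)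
  have xpos: "x > 0" using xt t8 by simp
  have "(1 - w) / (2 - w) > x" by (rule reduce[OF xpos w0 w1 wx])
  moreover have "Psi k d x = (1 - w) / (2 - w)"
    unfolding Psi_def w_def v_def Psi_dot_def by simp
  ultimately show ?thesis unfolding x_def by simp
qed


end
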